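(* Let $n\in\mathbb{N}$ and let $(X_1,\dots,X_n)$ be a random vector with joint distribution function $F_{(X_1,\dots,X_n)}$ and marginal distribution functions $F_i=F_{X_i}$, $i=1,\dots,n$. Let $C_F$ be a copula such that $F_{(X_1,\dots,X_n)}(x_1,\dots,x_n)=C_F(F_1(x_1),\dots,F_n(x_n))$ for all $(x_1,\dots,x_n)\in\mathbb{R}^n$. Let $(\alpha_1,\dots,\alpha_n)\in(0,1)^n$ satisfy $F_i^{\wedge}(\alpha_i)<F_i^{\vee}(\alpha_i)$ for all $i\in\{1,\dots,n\}$. Then \[C_F(\alpha_1,\dots,\alpha_n)=F_{(X_1,\dots,X_n)}\big(F_1^{\wedge}(\alpha_1),\dots,F_n^{\wedge}(\alpha_n)\big).\]
   Context: A copula is an $n$-variate distribution function on $[0,1]^n$ with uniform $U(0,1)$ marginals. For a univariate distribution function $G$ and $\alpha\in(0,1)$: $G^{\wedge}(\alpha)=\inf\{x:G(x)\ge\alpha\}$ (left $\alpha$-quantile) and $G^{\vee}(\alpha)=\inf\{x:G(x)>\alpha\}$ (right $\alpha$-quantile). *)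

theory Defs
  imports "HOL-Probability.Probability"
begin

definition left_quantile :: "(real \<Rightarrow> real) \<Rightarrow> real \<Rightarrow> real" where
  "left_quantile G \<alpha> = Inf {x. G x \<ge> \<alpha>}"

definition right_quantile :: "(real \<Rightarrow> real) \<Rightarrow> real \<Rightarrow> real" where
  "right_quantile G \<alpha> = Inf {x. G x > \<alpha>}"

definition joint_cdf :: "'a measure \<Rightarrow> ('n \<Rightarrow> 'a \<Rightarrow> real) \<Rightarrow> ('n \<Rightarrow> real) \<Rightarrow> real" where
  "joint_cdf M X x = measure M {\<omega> \<in> space M. \<forall>i. X i \<omega> \<le> x i}"

definition marg_cdf :: "'a measure \<Rightarrow> ('n \<Rightarrow> 'a \<Rightarrow> real) \<Rightarrow> 'n \<Rightarrow> real \<Rightarrow> real" where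
  "marg_cdf M X i t = measure M {\<omega> \<in> space M. X i \<omega> \<le> t}"

definition is_copula :: "(('n::finite \<Rightarrow> real) \<Rightarrow> real) \<Rightarrow> bool" where
  "is_copula C \<longleftrightarrow> (\<exists>\<mu>. prob_space \<mu> \<and> sets \<mu> = sets (PiM UNIV (\<lambda>_. borel)) \<and>
      (\<forall>i t. 0 \<le> t \<and> t \<le> 1 \<longrightarrow> measure \<mu> {u \<in> space \<mu>. u i \<le> t} = t) \<and>
      (\<forall>u. (\<forall>i. 0 \<le> u i \<and> u i \<le> 1) \<longrightarrow>
            C u = measure \<mu> {v \<in> space \<mu>. \<forall>i. v i \<le> u i}))"

end

theory Submission
  imports Defs
begin

lemma quantile_value:
  fixes F :: "real \<Rightarrow> real" and a :: real
  assumes mono: "\<And>x y. x \<le> y \<Longrightarrow> F x \<le> F y"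
    and rc: "\<And>x. continuous (at_right x) F"
    and bot: "(F \<longlongrightarrow> 0) at_bot" and top: "(F \<longlongrightarrow> 1) at_top"
    and a: "0 < a" "a < 1"
    and lt: "left_quantile F a < right_quantile F a"
  shows "F (left_quantile F a) = a"
proof -
  define S where "S = {x. a \<le> F x}"
  define T where "T = {x. a < F x}"
  define q where "q = left_quantile F a"
  have q: "q = Inf S" unfolding q_def S_def left_quantile_def by simp
  have "eventually (\<lambda>x. F x > a) at_top" using top a by (simp add: order_tendstoD(1))
  then obtain c where c: "\<And>x. x \<ge> c \<Longrightarrow> F x > a" by (auto simp: eventually_at_top_linorder)
  have "eventually (\<lambda>x. F x < a) at_bot" using bot a by (simp add: order_tendstoD(2))
  then obtain b where b: "\<And>x. x \<le> b \<Longrightarrow> F x < a" by (auto simp: eventually_at_bot_linorder)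
  have Sne: "S \<noteq> {}" proof -
    have "c \<in> S" using c[of c] unfolding S_def by simp
    thus ?thesis by blast
  qed
  have Tsub: "T \<subseteq> S" unfolding S_def T_def by auto
  have bddS: "bdd_below S"
  proof (rule bdd_belowI)
    fix x assume "x \<in> S"
    hence "a \<le> F x" unfolding S_def by simp
    thus "b \<le> x" using b[of x] by (cases "x \<le> b") auto
  qed
  have bddT: "bdd_below T" by (rule bdd_below_mono[OF bddS Tsub])
  have ge: "a \<le> F q"
  proof -
    have "eventually (\<lambda>x. a \<le> F x) (at_right q)"
      unfolding eventually_at_right_less
    proof -
      have "\<forall>x>q. a \<le> F x"
      proof (intro allI impI)
        fix x assume "q < x"
        then obtain s where "s \<in> S" "s < x" using cInf_lessD Sne q by blast
        thus "a \<le> F x" using mono[of s x] unfolding S_def by auto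
      qed
      thus "\<forall>\<^sub>F x in at_right q. a \<le> F x"
        by (simp add: eventually_at_right_field) (meson gt_ex)
    qed
    moreover have "(F \<longlongrightarrow> F q) (at_right q)" using rc[of q] by (simp add: continuous_within)
    ultimately show ?thesis by (intro tendsto_lowerbound) auto
  qed
  have le: "F q \<le> a"
  proof (rule ccontr)
    assume "\<not> F q \<le> a"
    hence "q \<in> T" unfolding T_def by auto
    hence "Inf T \<le> q" using bddT by (simp add: cInf_lower)
    thus False using lt unfolding right_quantile_def q_def T_def by simp
  qed
  show ?thesis using ge le q_def by simp
qed

theorem mainTheorem10:
  fixes M :: "'a measure" and X :: "'n::finite \<Rightarrow> 'a \<Rightarrow> real"
    and C :: "('n \<Rightarrow> real) \<Rightarrow> real" and \<alpha> :: "'n \<Rightarrow> real"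
  assumes "prob_space M"
    and "\<forall>i. X i \<in> borel_measurable M"
    and "is_copula C"
    and "\<forall>x. joint_cdf M X x = C (\<lambda>i. marg_cdf M X i (x i))"
    and "\<forall>i. 0 < \<alpha> i \<and> \<alpha> i < 1"
    and "\<forall>i. left_quantile (marg_cdf M X i) (\<alpha> i) < right_quantile (marg_cdf M X i) (\<alpha> i)"
  shows "C \<alpha> = joint_cdf M X (\<lambda>i. left_quantile (marg_cdf M X i) (\<alpha> i))"
proof -
  interpret prob_space M by fact
  have key: "marg_cdf M X i (left_quantile (marg_cdf M X i) (\<alpha> i)) = \<alpha> i" for i
  proof -
    interpret D: real_distribution "distr M borel (X i)"
      using assms(2) by auto
    have eq: "marg_cdf M X i = cdf (distr M borel (X i))"
    proof
      fix t
      have "X i -` {..t} \<inter> space M = {\<omega> \<in> space M. X i \<omega> \<le> t}" by auto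
      thus "marg_cdf M X i t = cdf (distr M borel (X i)) t"
        unfolding marg_cdf_def cdf_def using assms(2)
        by (subst measure_distr) auto
    qed
    have lt: "left_quantile (cdf (distr M borel (X i))) (\<alpha> i) < right_quantile (cdf (distr M borel (X i))) (\<alpha> i)"
      using assms(6)[rule_format, of i] by (simp only: eq)
    show ?thesis unfolding eq
      by (rule quantile_value[OF D.cdf_nondecreasing D.cdf_is_right_cont D.cdf_lim_at_bot D.cdf_lim_at_top_prob _ _ lt])
         (use assms(5) in blast)+
  qed
  show ?thesis using assms(4) key by simp
qed

end
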